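(* Let $\Bbbk$ be a field, $n\ge2$, $q\in\Bbbk$ a primitive $n$-th root of unity, $T_n(q)$ the Taft algebra and $A$ a unital associative $\Bbbk$-algebra. Let $\cdot:T_n(q)\otimes A\to A$ be a partial action of $T_n(q)$ on $A$. If $g\cdot 1_A=1_A$, then $\cdot$ is a global action.
   Context: The Taft algebra $T_n(q)$ is the Hopf algebra generated by $g,x$ with relations $g^n=1$, $x^n=0$, $xg=qgx$, $g$ group-like, $\Delta(x)=x\otimes1+g\otimes x$, $\varepsilon(x)=0$. For a bialgebra $H$ with $\Delta(h)=h_1\otimes h_2$, a partial action of $H$ on $A$ is a linear map $\cdot:H\otimes A\to A$ with $1_H\cdot a=a$, $h\cdot(ab)=(h_1\cdot a)(h_2\cdot b)$ and $h\cdot(k\cdot a)=(h_1\cdot1_A)(h_2k\cdot a)$ for all $h,k\in H$, $a,b\in A$. It is global if moreover $h\cdot(k\cdot a)=hk\cdot a$ for all $h,k,a$ (equivalently $h\cdot1_A=\varepsilon(h)1_A$ for all $h$). *)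

theory Defs
  imports Main
begin

definition k_algebra :: "('k::field \<Rightarrow> 'a::{ring,monoid_mult} \<Rightarrow> 'a) \<Rightarrow> bool" where
  "k_algebra sc \<longleftrightarrow>
     (\<forall>c d a. sc (c + d) a = sc c a + sc d a) \<and>
     (\<forall>c a b. sc c (a + b) = sc c a + sc c b) \<and>
     (\<forall>c d a. sc (c * d) a = sc c (sc d a)) \<and>
     (\<forall>a. sc 1 a = a) \<and>
     (\<forall>c a b. sc c (a * b) = sc c a * b) \<and>
     (\<forall>c a b. sc c (a * b) = a * sc c b)"

definition primitive_root :: "nat \<Rightarrow> 'k::field \<Rightarrow> bool" where
  "primitive_root n q \<longleftrightarrow> q ^ n = 1 \<and> (\<forall>k. 0 < k \<and> k < n \<longrightarrow> q ^ k \<noteq> 1)"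

fun qbinom :: "'k::field \<Rightarrow> nat \<Rightarrow> nat \<Rightarrow> 'k" where
  "qbinom q m 0 = 1"
| "qbinom q 0 (Suc k) = 0"
| "qbinom q (Suc m) (Suc k) = qbinom q m k + q ^ Suc k * qbinom q m (Suc k)"

text \<open>Elements of T_n(q) are represented by their coordinates with respect to the
 basis g^i x^j (0 \<le> i,j < n): a function c with c(i,j) the coefficient of g^i x^j,
 vanishing outside {0..<n} x {0..<n}. Elements of T_n(q) \<otimes> T_n(q) are
 represented likewise by coefficient functions on pairs of basis indices.\<close>

definition taft :: "nat \<Rightarrow> (nat \<times> nat \<Rightarrow> 'k::field) set" where
  "taft n = {h. \<forall>i j. (n \<le> i \<or> n \<le> j) \<longrightarrow> h (i, j) = 0}"

definition taft_basis :: "nat \<Rightarrow> nat \<Rightarrow> (nat \<times> nat \<Rightarrow> 'k::field)" where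
  "taft_basis i j = (\<lambda>p. if p = (i, j) then 1 else 0)"

definition taft_one :: "nat \<times> nat \<Rightarrow> 'k::field" where
  "taft_one = taft_basis 0 0"

text \<open>(g^a x^b)(g^c x^d) = q^(b c) g^((a+c) mod n) x^(b+d), which is 0 when b+d \<ge> n
 (since x^n = 0); this follows from x g = q g x and g^n = 1.\<close>
definition taft_bprod :: "nat \<Rightarrow> 'k::field \<Rightarrow> nat \<Rightarrow> nat \<Rightarrow> nat \<Rightarrow> nat \<Rightarrow> (nat \<times> nat \<Rightarrow> 'k)" where
  "taft_bprod n q a b c d =
     (\<lambda>p. if b + d < n \<and> p = ((a + c) mod n, b + d) then q ^ (b * c) else 0)"

definition taft_mult :: "nat \<Rightarrow> 'k::field \<Rightarrow> (nat \<times> nat \<Rightarrow> 'k) \<Rightarrow> (nat \<times> nat \<Rightarrow> 'k) \<Rightarrow> (nat \<times> nat \<Rightarrow> 'k)" where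
  "taft_mult n q h k =
     (\<lambda>p. \<Sum>u\<in>{..<n} \<times> {..<n}. \<Sum>v\<in>{..<n} \<times> {..<n}.
            h u * k v * taft_bprod n q (fst u) (snd u) (fst v) (snd v) p)"

text \<open>Comultiplication: \<Delta>(x) = x \<otimes> 1 + g \<otimes> x and g group-like give
 \<Delta>(g^i x^j) = \<Sum>_{k\<le>j} [j choose k]_q g^(i+k) x^(j-k) \<otimes> g^i x^k.\<close>
definition taft_bcomult :: "nat \<Rightarrow> 'k::field \<Rightarrow> nat \<Rightarrow> nat \<Rightarrow> ((nat \<times> nat) \<times> (nat \<times> nat) \<Rightarrow> 'k)" where
  "taft_bcomult n q i j =
     (\<lambda>(u, v). \<Sum>k\<in>{..j}. if u = ((i + k) mod n, j - k) \<and> v = (i, k) then qbinom q j k else 0)"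

definition taft_comult :: "nat \<Rightarrow> 'k::field \<Rightarrow> (nat \<times> nat \<Rightarrow> 'k) \<Rightarrow> ((nat \<times> nat) \<times> (nat \<times> nat) \<Rightarrow> 'k)" where
  "taft_comult n q h =
     (\<lambda>w. \<Sum>u\<in>{..<n} \<times> {..<n}. h u * taft_bcomult n q (fst u) (snd u) w)"

text \<open>A linear map T_n(q) \<otimes> A \<rightarrow> A is the same as a bilinear map
 act : T_n(q) \<times> A \<rightarrow> A.\<close>
definition taft_bilinear ::
  "nat \<Rightarrow> ('k::field \<Rightarrow> 'a::{ring,monoid_mult} \<Rightarrow> 'a) \<Rightarrow> ((nat \<times> nat \<Rightarrow> 'k) \<Rightarrow> 'a \<Rightarrow> 'a) \<Rightarrow> bool" where
  "taft_bilinear n sc act \<longleftrightarrow>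
     (\<forall>h\<in>taft n. \<forall>k\<in>taft n. \<forall>a. act (\<lambda>p. h p + k p) a = act h a + act k a) \<and>
     (\<forall>h\<in>taft n. \<forall>c a. act (\<lambda>p. c * h p) a = sc c (act h a)) \<and>
     (\<forall>h\<in>taft n. \<forall>a b. act h (a + b) = act h a + act h b) \<and>
     (\<forall>h\<in>taft n. \<forall>c a. act h (sc c a) = sc c (act h a))"

definition tensor_apply ::
  "nat \<Rightarrow> ('k::field \<Rightarrow> 'a \<Rightarrow> 'a::{ring,monoid_mult}) \<Rightarrow> ((nat \<times> nat) \<times> (nat \<times> nat) \<Rightarrow> 'k)
     \<Rightarrow> ((nat \<times> nat \<Rightarrow> 'k) \<Rightarrow> (nat \<times> nat \<Rightarrow> 'k) \<Rightarrow> 'a) \<Rightarrow> 'a" where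
  "tensor_apply n sc F f =
     (\<Sum>u\<in>{..<n} \<times> {..<n}. \<Sum>v\<in>{..<n} \<times> {..<n}.
        sc (F (u, v)) (f (taft_basis (fst u) (snd u)) (taft_basis (fst v) (snd v))))"

definition taft_partial_action ::
  "nat \<Rightarrow> 'k::field \<Rightarrow> ('k \<Rightarrow> 'a::{ring,monoid_mult} \<Rightarrow> 'a) \<Rightarrow> ((nat \<times> nat \<Rightarrow> 'k) \<Rightarrow> 'a \<Rightarrow> 'a) \<Rightarrow> bool" where
  "taft_partial_action n q sc act \<longleftrightarrow>
     taft_bilinear n sc act \<and>
     (\<forall>a. act taft_one a = a) \<and>
     (\<forall>h\<in>taft n. \<forall>a b.
        act h (a * b) = tensor_apply n sc (taft_comult n q h) (\<lambda>h1 h2. act h1 a * act h2 b)) \<and>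
     (\<forall>h\<in>taft n. \<forall>k\<in>taft n. \<forall>a.
        act h (act k a) =
          tensor_apply n sc (taft_comult n q h) (\<lambda>h1 h2. act h1 1 * act (taft_mult n q h2 k) a))"

definition taft_global_action ::
  "nat \<Rightarrow> 'k::field \<Rightarrow> ('k \<Rightarrow> 'a::{ring,monoid_mult} \<Rightarrow> 'a) \<Rightarrow> ((nat \<times> nat \<Rightarrow> 'k) \<Rightarrow> 'a \<Rightarrow> 'a) \<Rightarrow> bool" where
  "taft_global_action n q sc act \<longleftrightarrow>
     taft_partial_action n q sc act \<and>
     (\<forall>h\<in>taft n. \<forall>k\<in>taft n. \<forall>a. act h (act k a) = act (taft_mult n q h k) a)"

end

theory Submission
  imports Defs
begin

lemma sc_zero: "k_algebra sc \<Longrightarrow> sc 0 x = 0"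
proof -
  assume k: "k_algebra sc"
  have "sc (0+0) x = sc 0 x + sc 0 x" using k unfolding k_algebra_def by blast
  then show ?thesis by simp
qed

lemma sc_zero_r: "k_algebra sc \<Longrightarrow> sc c 0 = 0"
proof -
  assume k: "k_algebra sc"
  have "sc c (0+0) = sc c 0 + sc c 0" using k unfolding k_algebra_def by blast
  then show ?thesis by simp
qed

lemma sc_one: "k_algebra sc \<Longrightarrow> sc 1 x = x"
  unfolding k_algebra_def by blast

lemma sc_mult: "k_algebra sc \<Longrightarrow> sc c (sc d x) = sc (c*d) x"
  unfolding k_algebra_def by metis

lemma sc_sum: assumes k: "k_algebra sc" shows "finite S \<Longrightarrow> sc (\<Sum>v\<in>S. c v) x = (\<Sum>v\<in>S. sc (c v) x)"
proof (induction S rule: finite_induct)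
  case empty then show ?case by (simp add: sc_zero[OF k])
next
  case (insert a S)
  then show ?case using k unfolding k_algebra_def by simp
qed

lemma bil_add: "taft_bilinear n sc act \<Longrightarrow> h \<in> taft n \<Longrightarrow> k \<in> taft n \<Longrightarrow> act (\<lambda>p. h p + k p) a = act h a + act k a"
  unfolding taft_bilinear_def by blast
lemma bil_smul: "taft_bilinear n sc act \<Longrightarrow> h \<in> taft n \<Longrightarrow> act (\<lambda>p. c * h p) a = sc c (act h a)"
  unfolding taft_bilinear_def by blast

lemma act_h_zero: "taft_bilinear n sc act \<Longrightarrow> h \<in> taft n \<Longrightarrow> act h 0 = 0"
proof -
  assume b: "taft_bilinear n sc act" and h: "h \<in> taft n"
  have "act h (0+0) = act h 0 + act h 0" using b h unfolding taft_bilinear_def by blast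
  then show ?thesis by simp
qed

lemma taft_lin: "(\<forall>v\<in>S. f v \<in> taft n) \<Longrightarrow> (\<lambda>p. \<Sum>v\<in>S. c v * f v p) \<in> taft n"
  unfolding taft_def by auto

lemma taft_zero: "(\<lambda>p. 0) \<in> taft n"
  unfolding taft_def by auto

lemma act_zero_fun: "taft_bilinear n sc act \<Longrightarrow> k_algebra sc \<Longrightarrow> act (\<lambda>p. 0) a = 0"
proof -
  assume b: "taft_bilinear n sc act" and k: "k_algebra sc"
  have "act (\<lambda>p. 0 * (\<lambda>p. 0) p) a = sc 0 (act (\<lambda>p. 0) a)"
    using bil_smul[OF b taft_zero] by simp
  then show ?thesis using sc_zero[OF k] by simp
qed

lemma act_sum:
  assumes b: "taft_bilinear n sc act" and k: "k_algebra sc" and fin: "finite S"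
  shows "(\<forall>v\<in>S. f v \<in> taft n) \<Longrightarrow> act (\<lambda>p. \<Sum>v\<in>S. c v * f v p) a = (\<Sum>v\<in>S. sc (c v) (act (f v) a))"
  using fin
proof (induction S rule: finite_induct)
  case empty then show ?case using act_zero_fun[OF b k] by simp
next
  case (insert x S)
  have fx: "f x \<in> taft n" using insert by auto
  have t1: "(\<lambda>p. c x * f x p) \<in> taft n" using fx unfolding taft_def by auto
  have t2: "(\<lambda>p. \<Sum>v\<in>S. c v * f v p) \<in> taft n" using insert taft_lin by auto
  have "act (\<lambda>p. \<Sum>v\<in>insert x S. c v * f v p) a = act (\<lambda>p. (\<lambda>p. c x * f x p) p + (\<lambda>p. \<Sum>v\<in>S. c v * f v p) p) a"
    using insert by simp
  also have "\<dots> = act (\<lambda>p. c x * f x p) a + act (\<lambda>p. \<Sum>v\<in>S. c v * f v p) a"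
    using bil_add[OF b t1 t2] by simp
  also have "act (\<lambda>p. c x * f x p) a = sc (c x) (act (f x) a)"
    using bil_smul[OF b fx] by simp
  finally show ?case using insert by simp
qed

lemma basis_eq: "taft_basis i j p = (if p = (i,j) then 1 else 0)"
  unfolding taft_basis_def by simp

lemma basis_in: "i < n \<Longrightarrow> j < n \<Longrightarrow> taft_basis i j \<in> taft n"
  unfolding taft_def taft_basis_def by auto

lemma if10: "(if P then 1 else 0) * (x::'k::field) = (if P then x else 0)" by simp

lemma decomp:
  assumes h: "h \<in> taft n"
  shows "h = (\<lambda>p. \<Sum>w\<in>{..<n} \<times> {..<n}. h w * taft_basis (fst w) (snd w) p)"
proof
  fix p :: "nat \<times> nat"
  obtain a b where p: "p = (a,b)" by force
  have "(\<Sum>w\<in>{..<n} \<times> {..<n}. h w * taft_basis (fst w) (snd w) p)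
     = (\<Sum>w\<in>{..<n} \<times> {..<n}. if w = p then h w else 0)"
    by (rule sum.cong) (auto simp: basis_eq)
  also have "\<dots> = (if p \<in> {..<n} \<times> {..<n} then h p else 0)"
    by (simp add: sum.delta')
  also have "\<dots> = h p" using h p unfolding taft_def by auto
  finally show "h p = (\<Sum>w\<in>{..<n} \<times> {..<n}. h w * taft_basis (fst w) (snd w) p)" by simp
qed

lemma mult_basis_left:
  assumes w: "w \<in> {..<n} \<times> {..<n}"
  shows "taft_mult n q (taft_basis (fst w) (snd w)) K p
     = (\<Sum>v\<in>{..<n} \<times> {..<n}. K v * taft_bprod n q (fst w) (snd w) (fst v) (snd v) p)"
proof -
  have "taft_mult n q (taft_basis (fst w) (snd w)) K p
     = (\<Sum>u\<in>{..<n} \<times> {..<n}. if u = w then (\<Sum>v\<in>{..<n} \<times> {..<n}. K v * taft_bprod n q (fst u) (snd u) (fst v) (snd v) p) else 0)"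
    unfolding taft_mult_def
    by (rule sum.cong) (auto simp: basis_eq)
  also have "\<dots> = (\<Sum>v\<in>{..<n} \<times> {..<n}. K v * taft_bprod n q (fst w) (snd w) (fst v) (snd v) p)"
    using w by (simp add: sum.delta')
  finally show ?thesis .
qed

lemma mult_decomp:
  "taft_mult n q h K = (\<lambda>p. \<Sum>w\<in>{..<n} \<times> {..<n}. h w * taft_mult n q (taft_basis (fst w) (snd w)) K p)"
proof
  fix p
  have "(\<Sum>w\<in>{..<n} \<times> {..<n}. h w * taft_mult n q (taft_basis (fst w) (snd w)) K p)
    = (\<Sum>w\<in>{..<n} \<times> {..<n}. h w * (\<Sum>v\<in>{..<n} \<times> {..<n}. K v * taft_bprod n q (fst w) (snd w) (fst v) (snd v) p))"
    by (rule sum.cong) (simp_all add: mult_basis_left)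
  also have "\<dots> = taft_mult n q h K p"
    unfolding taft_mult_def by (simp add: sum_distrib_left mult.assoc)
  finally show "taft_mult n q h K p = (\<Sum>w\<in>{..<n} \<times> {..<n}. h w * taft_mult n q (taft_basis (fst w) (snd w)) K p)" by simp
qed

lemma mult_in: assumes n: "0 < n" shows "taft_mult n q h K \<in> taft n"
proof -
  have m: "\<And>x. \<not> n \<le> x mod n" using n by (simp add: not_le)
  show ?thesis unfolding taft_def taft_mult_def taft_bprod_def
    by (auto intro!: sum.neutral simp: m)
qed

lemma basis_mult: "a < n \<Longrightarrow> b < n \<Longrightarrow> c < n \<Longrightarrow> d < n \<Longrightarrow>
  taft_mult n q (taft_basis a b) (taft_basis c d) = taft_bprod n q a b c d"
proof
  fix p assume *: "a < n" "b < n" "c < n" "d < n"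
  have "taft_mult n q (taft_basis (fst (a,b)) (snd (a,b))) (taft_basis c d) p =
     (\<Sum>v\<in>{..<n} \<times> {..<n}. if v = (c,d) then taft_bprod n q a b (fst v) (snd v) p else 0)"
    using * by (subst mult_basis_left) (auto simp: basis_eq if10 intro!: sum.cong)
  also have "\<dots> = taft_bprod n q a b c d p" using * by (simp add: sum.delta')
  finally show "taft_mult n q (taft_basis a b) (taft_basis c d) p = taft_bprod n q a b c d p" by simp
qed

lemma comult_basis: "i < n \<Longrightarrow> j < n \<Longrightarrow> taft_comult n q (taft_basis i j) = taft_bcomult n q i j"
proof
  fix x assume *: "i < n" "j < n"
  have "taft_comult n q (taft_basis i j) x = (\<Sum>u\<in>{..<n} \<times> {..<n}. if u = (i,j) then taft_bcomult n q (fst u) (snd u) x else 0)"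
    unfolding taft_comult_def by (rule sum.cong) (auto simp: basis_eq)
  also have "\<dots> = taft_bcomult n q i j x" using * by (simp add: sum.delta')
  finally show "taft_comult n q (taft_basis i j) x = taft_bcomult n q i j x" .
qed

lemma qbinom_big: "m < k \<Longrightarrow> qbinom q m k = 0"
proof (induction m arbitrary: k)
  case 0 then show ?case by (cases k) auto
next
  case (Suc m) then show ?case by (cases k) auto
qed

lemma qbinom_diag: "qbinom q m m = 1"
  by (induction m) (auto simp: qbinom_big)

lemma double_delta:
  assumes "U \<in> A" "V \<in> B" "finite B" "finite A"
  shows "(\<Sum>u\<in>A. \<Sum>v\<in>B. if u = U \<and> v = V then X u v else 0) = X U V"
proof -
  have "(\<Sum>u\<in>A. \<Sum>v\<in>B. if u = U \<and> v = V then X u v else 0) = (\<Sum>u\<in>A. if u = U then X u V else 0)"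
  proof (rule sum.cong)
    fix u assume "u \<in> A"
    show "(\<Sum>v\<in>B. if u = U \<and> v = V then X u v else 0) = (if u = U then X u V else 0)"
      using assms by (cases "u = U") (simp_all add: sum.delta')
  qed simp
  also have "\<dots> = X U V" using assms by (simp add: sum.delta')
  finally show ?thesis .
qed

lemma tensor_bcomult:
  assumes k: "k_algebra sc" and n: "0 < n" and i: "i < n" and j: "j < n"
  shows "tensor_apply n sc (taft_bcomult n q i j) f =
    (\<Sum>k\<in>{..j}. sc (qbinom q j k) (f (taft_basis ((i+k) mod n) (j-k)) (taft_basis i k)))"
proof -
  let ?N = "{..<n} \<times> {..<n}"
  let ?X = "\<lambda>k u v. sc (qbinom q j k) (f (taft_basis (fst u) (snd u)) (taft_basis (fst v) (snd v)))"
  let ?U = "\<lambda>k. ((i+k) mod n, j-k)" and ?V = "\<lambda>k. (i,k)"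
  have "tensor_apply n sc (taft_bcomult n q i j) f =
     (\<Sum>u\<in>?N. \<Sum>v\<in>?N. \<Sum>k\<in>{..j}. if u = ?U k \<and> v = ?V k then ?X k u v else 0)"
    unfolding tensor_apply_def taft_bcomult_def split_conv
  proof (intro sum.cong refl)
    fix u v
    show "sc (\<Sum>k\<in>{..j}. if u = ?U k \<and> v = ?V k then qbinom q j k else 0)
          (f (taft_basis (fst u) (snd u)) (taft_basis (fst v) (snd v))) =
         (\<Sum>k\<in>{..j}. if u = ?U k \<and> v = ?V k then ?X k u v else 0)"
      unfolding sc_sum[OF k finite_atMost]
      by (rule sum.cong) (simp_all add: sc_zero[OF k])
  qed
  also have "\<dots> = (\<Sum>k\<in>{..j}. \<Sum>u\<in>?N. \<Sum>v\<in>?N. if u = ?U k \<and> v = ?V k then ?X k u v else 0)"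
  proof -
    have "(\<Sum>u\<in>?N. \<Sum>v\<in>?N. \<Sum>k\<in>{..j}. if u = ?U k \<and> v = ?V k then ?X k u v else 0)
       = (\<Sum>u\<in>?N. \<Sum>k\<in>{..j}. \<Sum>v\<in>?N. if u = ?U k \<and> v = ?V k then ?X k u v else 0)"
      by (rule sum.cong[OF refl sum.swap])
    also have "\<dots> = (\<Sum>k\<in>{..j}. \<Sum>u\<in>?N. \<Sum>v\<in>?N. if u = ?U k \<and> v = ?V k then ?X k u v else 0)"
      by (rule sum.swap)
    finally show ?thesis .
  qed
  also have "\<dots> = (\<Sum>k\<in>{..j}. ?X k (?U k) (?V k))"
  proof (rule sum.cong)
    fix k assume "k \<in> {..j}"
    then have "?U k \<in> ?N" "?V k \<in> ?N" using n i j by auto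
    then show "(\<Sum>u\<in>?N. \<Sum>v\<in>?N. if u = ?U k \<and> v = ?V k then ?X k u v else 0) = ?X k (?U k) (?V k)"
      by (intro double_delta) auto
  qed simp
  finally show ?thesis by simp
qed

lemma partial_parts:
  assumes "taft_partial_action n q sc act"
  shows "taft_bilinear n sc act" "\<And>a. act taft_one a = a"
    "\<And>h a b. h \<in> taft n \<Longrightarrow> act h (a * b) = tensor_apply n sc (taft_comult n q h) (\<lambda>h1 h2. act h1 a * act h2 b)"
    "\<And>h k a. h \<in> taft n \<Longrightarrow> k \<in> taft n \<Longrightarrow>
        act h (act k a) = tensor_apply n sc (taft_comult n q h) (\<lambda>h1 h2. act h1 1 * act (taft_mult n q h2 k) a)"
  using assms unfolding taft_partial_action_def by blast+

theorem proposition3p2: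
  fixes n :: nat and q :: "'k::field"
    and sc :: "'k \<Rightarrow> 'a::{ring,monoid_mult} \<Rightarrow> 'a"
    and act :: "(nat \<times> nat \<Rightarrow> 'k) \<Rightarrow> 'a \<Rightarrow> 'a"
  assumes "2 \<le> n"
    and "primitive_root n q"
    and "k_algebra sc"
    and "taft_partial_action n q sc act"
    and "act (taft_basis 1 0) 1 = 1"
  shows "taft_global_action n q sc act"
proof -
  note n2 = assms(1) and k = assms(3) and P = assms(4) and g1 = assms(5)
  have n: "0 < n" using n2 by simp
  have b: "taft_bilinear n sc act" by (rule partial_parts(1)[OF P])
  have one: "\<And>a. act (taft_basis 0 0) a = a" using partial_parts(2)[OF P] unfolding taft_one_def .
  note mul = partial_parts(3)[OF P] and pa = partial_parts(4)[OF P]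
  have q0: "q \<noteq> 0" using assms(2) n unfolding primitive_root_def by (metis power_0_left zero_neq_one not_gr0)
  have mod1: "1 mod n = 1" using n2 by simp
  have e10: "taft_basis 1 0 \<in> taft n" "taft_basis 0 1 \<in> taft n" using n2 by (auto intro: basis_in)
  have qb10: "qbinom q 1 0 = 1" "qbinom q 1 1 = 1" by (simp_all add: qbinom_diag)
  have at1: "{..1::nat} = {0,1}" by auto
  have g0: "i < n \<Longrightarrow> act (taft_basis i 0) 1 = 1" for i
  proof (induction i)
    case 0 then show ?case using one by simp
  next
    case (Suc i)
    then have i: "i < n" by simp
    have bp: "taft_bprod n q 1 0 i 0 = taft_basis (Suc i) 0"
      using Suc.prems unfolding taft_bprod_def taft_basis_def by (auto simp: fun_eq_iff)
    have "act (taft_basis 1 0) (act (taft_basis i 0) 1) =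
      tensor_apply n sc (taft_bcomult n q 1 0) (\<lambda>h1 h2. act h1 1 * act (taft_mult n q h2 (taft_basis i 0)) 1)"
      using pa[OF e10(1) basis_in[OF i n]] comult_basis[of 1 n 0 q] n2 by simp
    also have "\<dots> = act (taft_basis (Suc i) 0) 1"
      using tensor_bcomult[OF k n, of 1 0] n2 mod1 g1 basis_mult[of 1 n 0 i 0 q] i n bp
      by (simp add: sc_one[OF k])
    finally have "act (taft_basis 1 0) (act (taft_basis i 0) 1) = act (taft_basis (Suc i) 0) 1" .
    then show ?case using Suc.IH[OF i] g1 by simp
  qed
  have x1: "act (taft_basis 0 1) 1 = 0"
  proof -
    have "act (taft_basis 0 1) 1 =
      tensor_apply n sc (taft_bcomult n q 0 1) (\<lambda>h1 h2. act h1 1 * act h2 1)"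
      using mul[OF e10(2), of 1 1] comult_basis[of 0 n 1 q] n2 by simp
    also have "\<dots> = act (taft_basis 0 1) 1 + act (taft_basis 0 1) 1"
      using tensor_bcomult[OF k n, of 0 1] n2 mod1 g1 one qb10 at1
      by (simp add: sc_one[OF k])
    finally show ?thesis by simp
  qed
  have key: "i < n \<Longrightarrow> Suc j < n \<Longrightarrow>
      act (taft_basis 0 1) (act (taft_basis i j) 1) = sc (q ^ i) (act (taft_basis i (Suc j)) 1)" for i j
  proof -
    assume i: "i < n" and j: "Suc j < n"
    have bp: "taft_bprod n q 0 1 i j = (\<lambda>p. q ^ i * taft_basis i (Suc j) p)"
      using i j unfolding taft_bprod_def taft_basis_def by (auto simp: fun_eq_iff)
    have "act (taft_basis 0 1) (act (taft_basis i j) 1) =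
      tensor_apply n sc (taft_bcomult n q 0 1) (\<lambda>h1 h2. act h1 1 * act (taft_mult n q h2 (taft_basis i j)) 1)"
      using pa[OF e10(2) basis_in[OF i]] j comult_basis[of 0 n 1 q] n2 by simp
    also have "\<dots> = act (\<lambda>p. q ^ i * taft_basis i (Suc j) p) 1"
      using tensor_bcomult[OF k n, of 0 1] n2 mod1 g1 x1 qb10 at1 basis_mult[of 0 n 1 i j q] i j bp
      by (simp add: sc_one[OF k] sc_zero_r[OF k])
    also have "\<dots> = sc (q ^ i) (act (taft_basis i (Suc j)) 1)"
      using bil_smul[OF b basis_in[OF i j]] by simp
    finally show ?thesis .
  qed
  have phi: "i < n \<Longrightarrow> j < n \<Longrightarrow> act (taft_basis i j) 1 = (if j = 0 then 1 else 0)" for i j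
  proof (induction j)
    case 0 then show ?case using g0 by simp
  next
    case (Suc j)
    have z: "act (taft_basis 0 1) (act (taft_basis i j) 1) = 0"
    proof (cases "j = 0")
      case True then show ?thesis using x1 g0 Suc by simp
    next
      case False then show ?thesis using Suc act_h_zero[OF b e10(2)] by simp
    qed
    have "sc (q ^ i) (act (taft_basis i (Suc j)) 1) = 0" using key[OF Suc.prems] z by simp
    then have "sc (inverse (q ^ i)) (sc (q ^ i) (act (taft_basis i (Suc j)) 1)) = 0"
      using sc_zero_r[OF k] by simp
    then show ?case using q0 by (simp add: sc_mult[OF k] sc_one[OF k])
  qed
  have basis_glob: "act (taft_basis (fst w) (snd w)) (act K a) = act (taft_mult n q (taft_basis (fst w) (snd w)) K) a"
    if w: "w \<in> {..<n} \<times> {..<n}" and K: "K \<in> taft n" for w K a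
  proof -
    obtain i j where wij: "w = (i,j)" by force
    have i: "i < n" and j: "j < n" using w wij by auto
    have "act (taft_basis i j) (act K a) =
      tensor_apply n sc (taft_bcomult n q i j) (\<lambda>h1 h2. act h1 1 * act (taft_mult n q h2 K) a)"
      using pa[OF basis_in[OF i j] K, of a] comult_basis[OF i j, of q] by simp
    also have "\<dots> = (\<Sum>k\<in>{..j}. sc (qbinom q j k) (act (taft_basis ((i+k) mod n) (j-k)) 1 * act (taft_mult n q (taft_basis i k) K) a))"
      by (rule tensor_bcomult[OF k n i j])
    also have "\<dots> = (\<Sum>k\<in>{..j}. if k = j then act (taft_mult n q (taft_basis i j) K) a else 0)"
    proof (rule sum.cong)
      fix k assume kj: "k \<in> {..j}"
      have "(i+k) mod n < n" using n by simp
      moreover have "j - k < n" using j by simp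
      ultimately show "sc (qbinom q j k) (act (taft_basis ((i+k) mod n) (j-k)) 1 * act (taft_mult n q (taft_basis i k) K) a)
         = (if k = j then act (taft_mult n q (taft_basis i j) K) a else 0)"
        using kj phi by (auto simp: qbinom_diag sc_one[OF k] sc_zero_r[OF k])
    qed simp
    also have "\<dots> = act (taft_mult n q (taft_basis i j) K) a" by (simp add: sum.delta')
    finally show ?thesis using wij by simp
  qed
  have glob: "act h (act K a) = act (taft_mult n q h K) a" if h: "h \<in> taft n" and K: "K \<in> taft n" for h K a
  proof -
    let ?N = "{..<n} \<times> {..<n}"
    have hd: "h = (\<lambda>p. \<Sum>w\<in>?N. h w * taft_basis (fst w) (snd w) p)" by (rule decomp[OF h])
    have "act h (act K a) = act (\<lambda>p. \<Sum>w\<in>?N. h w * taft_basis (fst w) (snd w) p) (act K a)"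
      using hd by metis
    also have "\<dots> = (\<Sum>w\<in>?N. sc (h w) (act (taft_basis (fst w) (snd w)) (act K a)))"
      by (rule act_sum[OF b k]) (auto intro: basis_in)
    also have "\<dots> = (\<Sum>w\<in>?N. sc (h w) (act (taft_mult n q (taft_basis (fst w) (snd w)) K) a))"
      using basis_glob[OF _ K] by simp
    also have "\<dots> = act (\<lambda>p. \<Sum>w\<in>?N. h w * taft_mult n q (taft_basis (fst w) (snd w)) K p) a"
      by (rule act_sum[OF b k, symmetric]) (auto intro: mult_in[OF n])
    also have "\<dots> = act (taft_mult n q h K) a"
      using mult_decomp[of n q h K] by simp
    finally show ?thesis .
  qed
  show ?thesis unfolding taft_global_action_def using P glob by blast
qed

end
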